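(* Let $\mathcal A$ be an NBA such that (1) $\sqsubseteq^{\mathrm{di}}\cap\sqsupseteq^{\mathrm{di}}=\mathrm{id}$, (2) $\sqsubseteq^{\mathrm{bw\text{-}di}}\cap\sqsupseteq^{\mathrm{bw\text{-}di}}=\mathrm{id}$, and (3) $\sqsubseteq^{\mathrm{di}}\cap\sqsubseteq^{\mathrm{bw\text{-}di}}=\mathrm{id}$. Then $\sqsubseteq^{\mathrm m}\cap\sqsupseteq^{\mathrm m}=\mathrm{id}$; in particular $\mathcal A/\!\sqsubseteq^{\mathrm m}$ is isomorphic to $\mathcal A$.
   Context: An NBA $\mathcal A=(\Sigma,Q,I,F,\delta)$ is assumed forward and backward complete. Direct simulation $\sqsubseteq^{\mathrm{di}}$: in the game from $(p_0,q_0)$, at round $i$ Spoiler picks $p_i\xrightarrow{\sigma_i}p_{i+1}$, Duplicator answers $q_i\xrightarrow{\sigma_i}q_{i+1}$; Duplicator wins if $p_i\in F\Rightarrow q_i\in F$ for all $i$. Backward direct simulation $\sqsubseteq^{\mathrm{bw\text{-}di}}$: same but with backward transitions $p_{i+1}\xrightarrow{\sigma_i}p_i$, $q_{i+1}\xrightarrow{\sigma_i}q_i$, and Duplicator wins if for all $i$, $p_i\in F\Rightarrow q_i\in F$ and $p_i\in I\Rightarrow q_i\in I$. In both cases $p\sqsubseteq q$ iff Duplicator has a winning strategy from $(p,q)$; these are preorders; $\sqsupseteq$ denotes the inverse relation. For relations $A,B$, $(x,y)\in A\circ B$ iff $\exists z$ with $(x,z)\in A$, $(z,y)\in B$. A relation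 $M\subseteq Q\times Q$ is a mediated simulation if $M\subseteq\ \sqsubseteq^{\mathrm{di}}\circ\sqsupseteq^{\mathrm{bw\text{-}di}}$ and $M\circ\sqsubseteq^{\mathrm{di}}\ \subseteq M$; $\sqsubseteq^{\mathrm m}$ is the union of all mediated simulations (itself a mediated simulation). $\mathrm{id}$ is the identity relation; quotient by a preorder merges its equivalence classes. *)

theory Defs
  imports Main
begin

text \<open>An NBA is given by alphabet S, states Q, initial states I, accepting states F
and transition relation D (triples (p, a, q) meaning p --a--> q).
Standing assumption: forward and backward complete.\<close>

definition nba :: "'a set \<Rightarrow> 'q set \<Rightarrow> 'q set \<Rightarrow> 'q set \<Rightarrow> ('q \<times> 'a \<times> 'q) set \<Rightarrow> bool" where
  "nba S Q I F D \<longleftrightarrow> finite S \<and> finite Q \<and> I \<subseteq> Q \<and> F \<subseteq> Q \<and> D \<subseteq> Q \<times> S \<times> Q"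

definition fw_complete :: "'a set \<Rightarrow> 'q set \<Rightarrow> ('q \<times> 'a \<times> 'q) set \<Rightarrow> bool" where
  "fw_complete S Q D \<longleftrightarrow> (\<forall>p\<in>Q. \<forall>a\<in>S. \<exists>q\<in>Q. (p, a, q) \<in> D)"

definition bw_complete :: "'a set \<Rightarrow> 'q set \<Rightarrow> ('q \<times> 'a \<times> 'q) set \<Rightarrow> bool" where
  "bw_complete S Q D \<longleftrightarrow> (\<forall>p\<in>Q. \<forall>a\<in>S. \<exists>q\<in>Q. (q, a, p) \<in> D)"

text \<open>Duplicator's response sequence: given Duplicator's strategy f (mapping the history of
Spoiler's moves, i.e. the list of (letter, new Spoiler state) pairs, to Duplicator's next state),
the initial state q0, Spoiler's letters sg and Spoiler's states ps.\<close>

primrec dup_play :: "(('a \<times> 'q) list \<Rightarrow> 'q) \<Rightarrow> 'q \<Rightarrow> (nat \<Rightarrow> 'a) \<Rightarrow> (nat \<Rightarrow> 'q) \<Rightarrow> nat \<Rightarrow> 'q" where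
  "dup_play f q0 sg ps 0 = q0"
| "dup_play f q0 sg ps (Suc i) = f (map (\<lambda>j. (sg j, ps (Suc j))) [0..<Suc i])"

definition di_sim :: "'q set \<Rightarrow> 'q set \<Rightarrow> ('q \<times> 'a \<times> 'q) set \<Rightarrow> ('q \<times> 'q) set" where
  "di_sim Q F D = {(p0, q0). p0 \<in> Q \<and> q0 \<in> Q \<and>
     (\<exists>f. \<forall>ps sg. ps 0 = p0 \<and> (\<forall>i. (ps i, sg i, ps (Suc i)) \<in> D) \<longrightarrow>
        (\<forall>i. let qs = dup_play f q0 sg ps in
              (qs i, sg i, qs (Suc i)) \<in> D \<and> (ps i \<in> F \<longrightarrow> qs i \<in> F)))}"

definition bw_di_sim :: "'q set \<Rightarrow> 'q set \<Rightarrow> 'q set \<Rightarrow> ('q \<times> 'a \<times> 'q) set \<Rightarrow> ('q \<times> 'q) set" where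
  "bw_di_sim Q I F D = {(p0, q0). p0 \<in> Q \<and> q0 \<in> Q \<and>
     (\<exists>f. \<forall>ps sg. ps 0 = p0 \<and> (\<forall>i. (ps (Suc i), sg i, ps i) \<in> D) \<longrightarrow>
        (\<forall>i. let qs = dup_play f q0 sg ps in
              (qs (Suc i), sg i, qs i) \<in> D \<and> (ps i \<in> F \<longrightarrow> qs i \<in> F)
              \<and> (ps i \<in> I \<longrightarrow> qs i \<in> I)))}"

definition mediated_sim :: "'q set \<Rightarrow> 'q set \<Rightarrow> 'q set \<Rightarrow> ('q \<times> 'a \<times> 'q) set \<Rightarrow> ('q \<times> 'q) set \<Rightarrow> bool" where
  "mediated_sim Q I F D M \<longleftrightarrow>
     M \<subseteq> Q \<times> Q \<and> M \<subseteq> di_sim Q F D O (bw_di_sim Q I F D)\<inverse> \<and> M O di_sim Q F D \<subseteq> M"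

definition med_sim :: "'q set \<Rightarrow> 'q set \<Rightarrow> 'q set \<Rightarrow> ('q \<times> 'a \<times> 'q) set \<Rightarrow> ('q \<times> 'q) set" where
  "med_sim Q I F D = \<Union>{M. mediated_sim Q I F D M}"

definition quot_states :: "'q set \<Rightarrow> ('q \<times> 'q) set \<Rightarrow> 'q set set" where
  "quot_states Q R = Q // (R \<inter> R\<inverse>)"

definition quot_init :: "'q set \<Rightarrow> ('q \<times> 'q) set \<Rightarrow> 'q set \<Rightarrow> 'q set set" where
  "quot_init Q R I = {C \<in> quot_states Q R. C \<inter> I \<noteq> {}}"

definition quot_acc :: "'q set \<Rightarrow> ('q \<times> 'q) set \<Rightarrow> 'q set \<Rightarrow> 'q set set" where
  "quot_acc Q R F = {C \<in> quot_states Q R. C \<inter> F \<noteq> {}}"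

definition quot_trans :: "'q set \<Rightarrow> ('q \<times> 'q) set \<Rightarrow> ('q \<times> 'a \<times> 'q) set \<Rightarrow> ('q set \<times> 'a \<times> 'q set) set" where
  "quot_trans Q R D = {(C, a, C'). C \<in> quot_states Q R \<and> C' \<in> quot_states Q R \<and>
      (\<exists>p\<in>C. \<exists>p'\<in>C'. (p, a, p') \<in> D)}"

definition nba_iso :: "'q set \<Rightarrow> 'q set \<Rightarrow> 'q set \<Rightarrow> ('q \<times> 'a \<times> 'q) set \<Rightarrow>
    'r set \<Rightarrow> 'r set \<Rightarrow> 'r set \<Rightarrow> ('r \<times> 'a \<times> 'r) set \<Rightarrow> bool" where
  "nba_iso Q I F D Q' I' F' D' \<longleftrightarrow> (\<exists>h. bij_betw h Q Q' \<and>
      (\<forall>q\<in>Q. h q \<in> I' \<longleftrightarrow> q \<in> I) \<and> (\<forall>q\<in>Q. h q \<in> F' \<longleftrightarrow> q \<in> F) \<and>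
      (\<forall>p\<in>Q. \<forall>q\<in>Q. \<forall>a. (h p, a, h q) \<in> D' \<longleftrightarrow> (p, a, q) \<in> D))"

end

theory Submission
  imports Defs
begin

definition gsim :: "'q set \<Rightarrow> ('q \<times> 'a \<times> 'q) set \<Rightarrow> ('q \<times> 'q) set \<Rightarrow> ('q \<times> 'q) set" where
  "gsim Q T W = {(p0, q0). p0 \<in> Q \<and> q0 \<in> Q \<and>
     (\<exists>f. \<forall>ps sg. ps 0 = p0 \<and> (\<forall>i. (ps i, sg i, ps (Suc i)) \<in> T) \<longrightarrow>
        (\<forall>i. let qs = dup_play f q0 sg ps in
              (qs i, sg i, qs (Suc i)) \<in> T \<and> (ps i, qs i) \<in> W))}"

lemma di_gsim: "di_sim Q F D = gsim Q D {(a,b). a \<in> F \<longrightarrow> b \<in> F}"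
  unfolding di_sim_def gsim_def by (simp add: Let_def)

lemma bw_gsim: "bw_di_sim Q I F D = gsim Q {(p,a,q). (q,a,p) \<in> D}
   {(a,b). (a \<in> F \<longrightarrow> b \<in> F) \<and> (a \<in> I \<longrightarrow> b \<in> I)}"
  unfolding bw_di_sim_def gsim_def by (simp add: Let_def)

lemma gsimI:
  assumes "p0 \<in> Q" "q0 \<in> Q" "\<forall>ps sg. ps 0 = p0 \<and> (\<forall>i. (ps i, sg i, ps (Suc i)) \<in> T) \<longrightarrow>
        (\<forall>i. let qs = dup_play f q0 sg ps in
              (qs i, sg i, qs (Suc i)) \<in> T \<and> (ps i, qs i) \<in> W)"
  shows "(p0,q0) \<in> gsim Q T W"
  unfolding gsim_def using assms by blast

lemma dup_copy: "dup_play (\<lambda>h. snd (last h)) p sg ps i = (if i = 0 then p else ps i)"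
  by (cases i) auto

lemma gsim_refl:
  assumes "p \<in> Q" "\<And>x. (x,x) \<in> W" shows "(p,p) \<in> gsim Q T W"
  unfolding gsim_def using assms
  by (auto intro!: exI[of _ "\<lambda>h. snd (last h)"] simp: dup_copy Let_def)

definition compf where
  "compf f1 f2 h = f2 (map (\<lambda>k. (fst (h!k), f1 (take (Suc k) h))) [0..<length h])"

lemma dup_comp: "dup_play (compf f1 f2) r sg ps n = dup_play f2 r sg (dup_play f1 q sg ps) n"
proof (cases n)
  case (Suc i)
  have "map (\<lambda>k. (fst (map (\<lambda>j. (sg j, ps (Suc j))) [0..<Suc i] ! k),
             f1 (take (Suc k) (map (\<lambda>j. (sg j, ps (Suc j))) [0..<Suc i])))) [0..<Suc i]
      = map (\<lambda>j. (sg j, dup_play f1 q sg ps (Suc j))) [0..<Suc i]"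
  proof (rule map_cong[OF refl])
    fix k assume "k \<in> set [0..<Suc i]"
    then have "k < Suc i" by (simp del: upt_Suc)
    then show "(fst (map (\<lambda>j. (sg j, ps (Suc j))) [0..<Suc i] ! k),
             f1 (take (Suc k) (map (\<lambda>j. (sg j, ps (Suc j))) [0..<Suc i])))
          = (sg k, dup_play f1 q sg ps (Suc k))"
      by (simp add: take_map take_upt min_def del: upt_Suc)
  qed
  note eq = this
  show ?thesis by (simp only: Suc dup_play.simps compf_def length_map length_upt diff_zero eq)
qed simp

lemma gsim_trans:
  assumes "(p,q) \<in> gsim Q T W" "(q,r) \<in> gsim Q T W" "trans W"
  shows "(p,r) \<in> gsim Q T W"
proof -
  from assms(1) obtain f1 where f1: "\<And>ps sg. ps 0 = p \<Longrightarrow> (\<forall>i. (ps i, sg i, ps (Suc i)) \<in> T) \<Longrightarrow>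
        (\<forall>i. (dup_play f1 q sg ps i, sg i, dup_play f1 q sg ps (Suc i)) \<in> T \<and> (ps i, dup_play f1 q sg ps i) \<in> W)"
    and pq: "p \<in> Q" "q \<in> Q"
    unfolding gsim_def by (auto simp: Let_def)
  from assms(2) obtain f2 where f2: "\<And>ps sg. ps 0 = q \<Longrightarrow> (\<forall>i. (ps i, sg i, ps (Suc i)) \<in> T) \<Longrightarrow>
        (\<forall>i. (dup_play f2 r sg ps i, sg i, dup_play f2 r sg ps (Suc i)) \<in> T \<and> (ps i, dup_play f2 r sg ps i) \<in> W)"
    and r: "r \<in> Q"
    unfolding gsim_def by (auto simp: Let_def)
  have "\<forall>ps sg. ps 0 = p \<and> (\<forall>i. (ps i, sg i, ps (Suc i)) \<in> T) \<longrightarrow>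
        (\<forall>i. let qs = dup_play (compf f1 f2) r sg ps in
              (qs i, sg i, qs (Suc i)) \<in> T \<and> (ps i, qs i) \<in> W)"
  proof (intro allI impI)
    fix ps sg i assume h: "ps 0 = p \<and> (\<forall>i. (ps i, sg i, ps (Suc i)) \<in> T)"
    define qs where "qs = dup_play f1 q sg ps"
    have a: "\<forall>i. (qs i, sg i, qs (Suc i)) \<in> T \<and> (ps i, qs i) \<in> W"
      using f1 h unfolding qs_def by blast
    have "qs 0 = q" by (simp add: qs_def)
    then have b: "\<forall>i. (dup_play f2 r sg qs i, sg i, dup_play f2 r sg qs (Suc i)) \<in> T \<and> (qs i, dup_play f2 r sg qs i) \<in> W"
      using f2 a by blast
    show "let qs = dup_play (compf f1 f2) r sg ps in
              (qs i, sg i, qs (Suc i)) \<in> T \<and> (ps i, qs i) \<in> W"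
      using a b assms(3) unfolding dup_comp[of f1 f2 r sg ps _ q, folded qs_def] Let_def
      by (meson transD)
  qed
  then show ?thesis using pq r by (intro gsimI)
qed

lemma di_refl: "p \<in> Q \<Longrightarrow> (p,p) \<in> di_sim Q F D"
  unfolding di_gsim by (rule gsim_refl) auto
lemma bw_refl: "p \<in> Q \<Longrightarrow> (p,p) \<in> bw_di_sim Q I F D"
  unfolding bw_gsim by (rule gsim_refl) auto
lemma di_trans: "(p,q) \<in> di_sim Q F D \<Longrightarrow> (q,r) \<in> di_sim Q F D \<Longrightarrow> (p,r) \<in> di_sim Q F D"
  unfolding di_gsim by (erule gsim_trans) (auto simp: trans_def)
lemma bw_trans: "(p,q) \<in> bw_di_sim Q I F D \<Longrightarrow> (q,r) \<in> bw_di_sim Q I F D \<Longrightarrow> (p,r) \<in> bw_di_sim Q I F D"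
  unfolding bw_gsim by (erule gsim_trans) (auto simp: trans_def)
lemma di_Q: "(p,q) \<in> di_sim Q F D \<Longrightarrow> p \<in> Q \<and> q \<in> Q"
  unfolding di_sim_def by auto

lemma med_mediated: "mediated_sim Q I F D (med_sim Q I F D)"
proof -
  let ?X = "di_sim Q F D O (bw_di_sim Q I F D)\<inverse>" and ?di = "di_sim Q F D"
  let ?S = "{M. mediated_sim Q I F D M}"
  have h: "\<And>M. M \<in> ?S \<Longrightarrow> M \<subseteq> Q \<times> Q \<and> M \<subseteq> ?X \<and> M O ?di \<subseteq> M"
    by (simp add: mediated_sim_def)
  have 1: "\<Union>?S \<subseteq> Q \<times> Q" using h by (intro Union_least) blast
  have 2: "\<Union>?S \<subseteq> ?X" using h by (intro Union_least) blast
  have 3: "\<Union>?S O ?di \<subseteq> \<Union>?S"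
  proof
    fix x assume "x \<in> \<Union>?S O ?di"
    then obtain a b c M where "x = (a,c)" "(a,b) \<in> M" "M \<in> ?S" "(b,c) \<in> ?di" by blast
    then show "x \<in> \<Union>?S" using h[of M] by blast
  qed
  show ?thesis unfolding med_sim_def using 1 2 3 by (subst mediated_sim_def) (intro conjI)
qed

lemma di_mediated: "mediated_sim Q I F D (di_sim Q F D)"
  unfolding mediated_sim_def
proof (intro conjI)
  show "di_sim Q F D \<subseteq> Q \<times> Q"
  proof
    fix x assume x: "x \<in> di_sim Q F D"
    obtain a b where ab: "x = (a,b)" by (cases x)
    show "x \<in> Q \<times> Q" using di_Q[of a b Q F D] x ab by simp
  qed
  show "di_sim Q F D \<subseteq> di_sim Q F D O (bw_di_sim Q I F D)\<inverse>"
  proof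
    fix x assume x: "x \<in> di_sim Q F D"
    obtain a b where ab: "x = (a,b)" by (cases x)
    with x have "(a,b) \<in> di_sim Q F D" by simp
    moreover have "(b,b) \<in> bw_di_sim Q I F D" using di_Q[OF \<open>(a,b) \<in> di_sim Q F D\<close>] bw_refl[of b Q I F D] by simp
    ultimately show "x \<in> di_sim Q F D O (bw_di_sim Q I F D)\<inverse>" using ab by (auto intro: relcompI)
  qed
  show "di_sim Q F D O di_sim Q F D \<subseteq> di_sim Q F D"
  proof
    fix x assume "x \<in> di_sim Q F D O di_sim Q F D"
    then obtain a b c where "x = (a,c)" "(a,b) \<in> di_sim Q F D" "(b,c) \<in> di_sim Q F D" by blast
    then show "x \<in> di_sim Q F D" using di_trans[of a b Q F D c] by simp
  qed
qed

lemma med_antisym: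
  assumes A1: "di_sim Q F D \<inter> (di_sim Q F D)\<inverse> = Id_on Q"
    and A2: "bw_di_sim Q I F D \<inter> (bw_di_sim Q I F D)\<inverse> = Id_on Q"
    and A3: "di_sim Q F D \<inter> bw_di_sim Q I F D = Id_on Q"
    and pq: "(p,q) \<in> med_sim Q I F D" and qp: "(q,p) \<in> med_sim Q I F D"
  shows "p = q"
proof -
  let ?M = "med_sim Q I F D" and ?di = "di_sim Q F D" and ?bw = "bw_di_sim Q I F D"
  have M1: "?M \<subseteq> ?di O ?bw\<inverse>" and M2: "?M O ?di \<subseteq> ?M"
    using med_mediated[of Q I F D] unfolding mediated_sim_def by auto
  have half: "(a,b) \<in> ?di" if ab: "(a,b) \<in> ?M" and ba: "(b,a) \<in> ?M" for a b
  proof -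
    from ab M1 obtain x where ax: "(a,x) \<in> ?di" and bx: "(b,x) \<in> ?bw" by blast
    from ba ax M2 have "(b,x) \<in> ?M" by blast
    with M1 obtain w where bw: "(b,w) \<in> ?di" and xw: "(x,w) \<in> ?bw" by blast
    have "(b,w) \<in> ?bw" using bw_trans[OF bx xw] .
    with bw A3 have "(b,w) \<in> Id_on Q" by blast
    then have "b = w" by auto
    with xw bx A2 have "(x,b) \<in> Id_on Q" by blast
    then have "x = b" by auto
    with ax show ?thesis by simp
  qed
  have "(p,q) \<in> Id_on Q" using half[OF pq qp] half[OF qp pq] A1 by blast
  then show ?thesis by auto
qed

theorem lemma7p2:
  fixes S :: "'a set" and Q I F :: "'q set" and D :: "('q \<times> 'a \<times> 'q) set"
  assumes "nba S Q I F D"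
    and "fw_complete S Q D" and "bw_complete S Q D"
    and "di_sim Q F D \<inter> (di_sim Q F D)\<inverse> = Id_on Q"
    and "bw_di_sim Q I F D \<inter> (bw_di_sim Q I F D)\<inverse> = Id_on Q"
    and "di_sim Q F D \<inter> bw_di_sim Q I F D = Id_on Q"
  shows "med_sim Q I F D \<inter> (med_sim Q I F D)\<inverse> = Id_on Q
    \<and> nba_iso Q I F D
        (quot_states Q (med_sim Q I F D)) (quot_init Q (med_sim Q I F D) I)
        (quot_acc Q (med_sim Q I F D) F) (quot_trans Q (med_sim Q I F D) D)"
proof -
  let ?M = "med_sim Q I F D"
  have diM: "di_sim Q F D \<subseteq> ?M" using di_mediated[of Q I F D] unfolding med_sim_def by blast
  have MQ: "?M \<subseteq> Q \<times> Q" using med_mediated[of Q I F D] unfolding mediated_sim_def by auto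
  have E: "?M \<inter> ?M\<inverse> = Id_on Q"
  proof
    show "?M \<inter> ?M\<inverse> \<subseteq> Id_on Q"
      using med_antisym[OF assms(4,5,6)] MQ by auto
    show "Id_on Q \<subseteq> ?M \<inter> ?M\<inverse>"
    proof
      fix x assume "x \<in> Id_on Q"
      then obtain a where "x = (a,a)" "a \<in> Q" by auto
      then show "x \<in> ?M \<inter> ?M\<inverse>" using diM di_refl[of a Q F D] by auto
    qed
  qed
  have QS: "quot_states Q ?M = (\<lambda>q. {q}) ` Q"
    unfolding quot_states_def E quotient_def by auto
  have inj: "inj_on (\<lambda>q. {q}) Q" by (auto simp: inj_on_def)
  have "nba_iso Q I F D (quot_states Q ?M) (quot_init Q ?M I) (quot_acc Q ?M F) (quot_trans Q ?M D)"
    unfolding nba_iso_def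
  proof (intro exI[of _ "\<lambda>q. {q}"] conjI ballI allI)
    show "bij_betw (\<lambda>q. {q}) Q (quot_states Q ?M)" using inj QS by (simp add: bij_betw_def)
  qed (auto simp: quot_init_def quot_acc_def quot_trans_def QS)
  with E show ?thesis by blast
qed

end
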